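(* For $\theta\in(0,1)$ define $P_0(\theta)=1-\theta$, $P_r(\theta)=r(1-\theta)\sum_{i=r}^{\infty}\frac{\theta^i}{i}$ for integers $r\ge1$, and $P(\theta)=\max_{r\ge 0}P_r(\theta)$. Let $E_1(x)=\int_x^\infty \frac{e^{-t}}{t}\,dt$ for $x>0$, let $F(x)=xE_1(x)$, let $\alpha\in(0,\infty)$ be the point where $F$ attains its maximum on $(0,\infty)$ (so $F'(\alpha)=0$), and let $\beta=F(\alpha)$ (numerically $\alpha\approx 0.434818$, $\beta\approx 0.281494$). Then as $\theta\to 1^-$, the optimal strategy approaches the positional strategy rejecting $\frac{\alpha}{1-\theta}$ initial candidates: if $r^*(\theta)$ denotes an index attaining $P(\theta)=P_{r^*(\theta)}(\theta)$, then $(1-\theta)\,r^*(\theta)\to\alpha$, and \[ \lim_{\theta\to 1^-}P(\theta)=\beta. \]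
   Context: Here $P_r(\theta)$ is the limit as $N\to\infty$ of the probability of winning the weighted game of best choice with the $r$-positional strategy: a permutation $\pi$ of $\{1,\dots,N\}$ is drawn with probability proportional to $\theta^{\pi^{-1}(N)-1}$, the player rejects the first $r$ candidates and then accepts the next candidate better than all previous ones, and wins if the accepted candidate has rank $N$ (best). *)

theory Defs
  imports "HOL-Analysis.Analysis"
begin

text \<open>Limiting win probability of the r-positional strategy in the weighted game.\<close>
definition Pr :: "real \<Rightarrow> nat \<Rightarrow> real" where
  "Pr \<theta> r = (if r = 0 then 1 - \<theta>
     else real r * (1 - \<theta>) * (\<Sum>i. \<theta> ^ (r + i) / real (r + i)))"

definition Popt :: "real \<Rightarrow> real" where
  "Popt \<theta> = (SUP r. Pr \<theta> r)"

definition E1 :: "real \<Rightarrow> real" where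
  "E1 x = integral {x..} (\<lambda>t. exp (- t) / t)"

definition F :: "real \<Rightarrow> real" where
  "F x = x * E1 x"

end

theory Submission
  imports Defs
begin


definition ff :: "real \<Rightarrow> real" where "ff t = exp (- t) / t"

lemma ff_cont: "continuous_on {a..b} ff" if "a > 0" for a b :: real
  unfolding ff_def using that by (intro continuous_intros) auto

lemma E1_integrable: assumes "a > 0" shows "ff integrable_on {a..}"
proof (rule measurable_bounded_by_integrable_imp_integrable_real)
  show "ff \<in> borel_measurable (lebesgue_on {a..})"
    by (rule continuous_imp_measurable_on_sets_lebesgue)
      (use assms in \<open>auto simp: ff_def intro!: continuous_intros\<close>)
  show "(\<lambda>x. exp (-1*x) / a) integrable_on {a..}"
    using integrable_on_exp_minus_to_infinity[of 1 a] by (intro integrable_on_divide) auto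
  show "\<bar>ff x\<bar> \<le> exp (-1*x) / a" if "x \<in> {a..}" for x
    using that assms by (auto simp: ff_def divide_simps mult_left_mono)
qed auto

lemma E1_has: "a > 0 \<Longrightarrow> (ff has_integral E1 a) {a..}"
proof -
  assume "a > 0"
  have "E1 a = integral {a..} ff" unfolding E1_def ff_def by simp
  then show ?thesis using E1_integrable[OF \<open>a>0\<close>] integrable_integral by metis
qed

lemma E1_split: assumes "0 < a" "a \<le> b" shows "E1 a = integral {a..b} ff + E1 b"
proof -
  have "(ff has_integral (integral {a..b} ff + E1 b)) ({a..b} \<union> {b..})"
    apply (rule has_integral_Un)
      apply (rule integrable_integral, rule integrable_continuous_real, rule ff_cont, fact)
     apply (rule E1_has) using assms apply simp
    apply (rule negligible_subset[of "{b}"]) by auto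
  moreover have "{a..b} \<union> {b..} = {a..}" using assms by auto
  ultimately show ?thesis using E1_has[OF assms(1)] has_integral_unique by metis
qed

lemma E1_bound: assumes "a > 0" shows "E1 a \<le> exp (- a) / a" "0 \<le> E1 a"
proof -
  have "((\<lambda>x. exp (-1*x) / a) has_integral (exp (-1*a)/1 / a)) {a..}"
    using has_integral_exp_minus_to_infinity[of 1 a] by (intro has_integral_divide) auto
  moreover have "ff x \<le> exp (-1*x) / a" if "x \<in> {a..}" for x
    using that assms by (auto simp: ff_def divide_simps mult_left_mono)
  ultimately show "E1 a \<le> exp (- a) / a"
    using has_integral_le[OF E1_has[OF assms]] by fastforce
  show "0 \<le> E1 a"
    using has_integral_nonneg[OF E1_has[OF assms]] assms by (auto simp: ff_def)
qed

lemma ff_mono: assumes "0 < x" "x \<le> y" shows "ff y \<le> ff x"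
proof -
  have "exp (-y) \<le> exp (-x)" using assms by simp
  then show ?thesis unfolding ff_def using assms
    by (intro frac_le) auto
qed

lemma ff_pos: "x > 0 \<Longrightarrow> ff x > 0" by (simp add: ff_def)

lemma int_bounds: assumes "0 < a" "a \<le> b"
  shows "(b - a) * ff b \<le> integral {a..b} ff" "integral {a..b} ff \<le> (b - a) * ff a"
proof -
  have int: "ff integrable_on {a..b}" by (rule integrable_continuous_real, rule ff_cont, fact)
  have "integral {a..b} (\<lambda>_. ff b) \<le> integral {a..b} ff"
    by (rule integral_le[OF _ int]) (use assms ff_mono in auto)
  then show "(b - a) * ff b \<le> integral {a..b} ff" using assms by simp
  have "integral {a..b} ff \<le> integral {a..b} (\<lambda>_. ff a)"
    by (rule integral_le[OF int]) (use assms ff_mono in auto)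
  then show "integral {a..b} ff \<le> (b - a) * ff a" using assms by simp
qed

lemma E1_pos: assumes "a > 0" shows "E1 a > 0"
proof -
  have "E1 a = integral {a..a+1} ff + E1 (a+1)" using E1_split assms by simp
  moreover have "integral {a..a+1} ff \<ge> ff (a+1)" using int_bounds(1)[of a "a+1"] assms by simp
  moreover have "E1 (a+1) \<ge> 0" using E1_bound assms by simp
  ultimately show ?thesis using ff_pos[of "a+1"] assms by linarith
qed

lemma E1_deriv: assumes "x > 0" shows "(E1 has_real_derivative - ff x) (at x)"
proof -
  define a where "a = x/2"
  define b where "b = 2*x"
  have ab: "0 < a" "a < x" "x < b" using assms by (auto simp: a_def b_def)
  have "((\<lambda>y. integral {a..y} ff) has_real_derivative ff x) (at x within {a..b})"
    by (rule integral_has_real_derivative) (use ab ff_cont in auto)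
  then have d: "((\<lambda>y. integral {a..y} ff) has_real_derivative ff x) (at x)"
    using at_within_Icc_at[OF ab(2,3)] by simp
  have "((\<lambda>y. E1 a - integral {a..y} ff) has_real_derivative - ff x) (at x)"
    using d by (auto intro!: derivative_eq_intros)
  then show ?thesis
    by (rule has_field_derivative_transform_within_open[of _ _ _ "{a<..}"])
      (use ab in \<open>auto, metis E1_split less_imp_le add_diff_cancel_left'\<close>)
qed

lemma E1_cont: "x > 0 \<Longrightarrow> isCont E1 x"
  using E1_deriv DERIV_isCont by blast




definition DD :: "real \<Rightarrow> real" where "DD x = E1 x - exp (- x)"

lemma F_deriv: assumes "x > 0" shows "(F has_real_derivative DD x) (at x)"
proof -
  have "((\<lambda>x. x * E1 x) has_real_derivative (1 * E1 x + (- ff x) * x)) (at x)"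
    by (rule DERIV_mult[OF DERIV_ident E1_deriv[OF assms]])
  moreover have "1 * E1 x + (- ff x) * x = DD x" using assms by (simp add: ff_def DD_def)
  ultimately show ?thesis unfolding F_def[abs_def] by simp
qed

lemma DD_deriv: assumes "x > 0" shows "(DD has_real_derivative (exp (-x) - ff x)) (at x)"
proof -
  have "((\<lambda>x. E1 x - exp (- x)) has_real_derivative (- ff x - exp (-x) * (-1))) (at x)"
    by (intro derivative_intros E1_deriv assms)
  then show ?thesis unfolding DD_def[abs_def] by simp
qed

lemma F_cont_on: "0 < a \<Longrightarrow> continuous_on {a..b} F"
  by (rule continuous_at_imp_continuous_on) (metis DERIV_isCont F_deriv less_le_trans atLeastAtMost_iff)

lemma DD_cont_on: "0 < a \<Longrightarrow> continuous_on {a..b} DD"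
  by (rule continuous_at_imp_continuous_on) (metis DERIV_isCont DD_deriv less_le_trans atLeastAtMost_iff)

lemma DD2_neg: assumes "0 < x" "x < 1" shows "exp (-x) - ff x < 0"
proof -
  have "exp (-x) < exp (-x) / x" using assms by (simp add: divide_simps)
  then show ?thesis by (simp add: ff_def)
qed

lemma DD_neg: assumes "x \<ge> 1" shows "DD x \<le> 0" and "x > 1 \<Longrightarrow> DD x < 0"
proof -
  have "E1 x \<le> exp (-x) / x" using E1_bound assms by simp
  moreover have "exp (-x) / x \<le> exp (-x)" using assms by (simp add: divide_simps)
  moreover have "x > 1 \<Longrightarrow> exp (-x) / x < exp (-x)" using assms by (simp add: divide_simps)
  ultimately show "DD x \<le> 0" "x > 1 \<Longrightarrow> DD x < 0" unfolding DD_def by linarith+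
qed

lemma DD_decr: assumes "0 < x" "x < y" "y \<le> 1" shows "DD y < DD x"
proof (rule DERIV_neg_imp_decreasing_open[OF assms(2)])
  fix z assume z: "x < z" "z < y"
  then show "\<exists>d. DERIV DD z :> d \<and> d < 0"
    using DD2_neg[of z] DD_deriv[of z] assms by auto
next
  show "continuous_on {x..y} DD" using DD_cont_on assms by blast
qed

locale amax =
  fixes \<alpha> :: real
  assumes alpha_pos: "\<alpha> > 0" and alpha_max: "\<forall>x>0. F x \<le> F \<alpha>"
begin

lemma DD_alpha: "DD \<alpha> = 0"
  by (rule DERIV_local_max[OF F_deriv[OF alpha_pos] alpha_pos]) (use alpha_max in auto)

lemma alpha_le1: "\<alpha> \<le> 1"
  using DD_neg(2)[of \<alpha>] DD_alpha by force

lemma DD_left: "0 < x \<Longrightarrow> x < \<alpha> \<Longrightarrow> DD x > 0"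
  using DD_decr[of x \<alpha>] alpha_le1 DD_alpha by auto

lemma DD_right: "\<alpha> < x \<Longrightarrow> DD x < 0"
proof (cases "x > 1")
  case True then show ?thesis using DD_neg by auto
next
  case False
  assume "\<alpha> < x" then show ?thesis using DD_decr[of \<alpha> x] False alpha_pos DD_alpha by auto
qed

lemma F_left: assumes "0 < x" "x < y" "y \<le> \<alpha>" shows "F x < F y"
proof (rule DERIV_pos_imp_increasing_open[OF assms(2)])
  fix z assume z: "x < z" "z < y"
  then show "\<exists>d. DERIV F z :> d \<and> d > 0"
    using DD_left[of z] F_deriv[of z] assms by auto
next
  show "continuous_on {x..y} F" using F_cont_on assms by blast
qed

lemma F_right: assumes "\<alpha> \<le> x" "x < y" shows "F y < F x"
proof (rule DERIV_neg_imp_decreasing_open[OF assms(2)])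
  fix z assume z: "x < z" "z < y"
  then show "\<exists>d. DERIV F z :> d \<and> d < 0"
    using DD_right[of z] F_deriv[of z] assms alpha_pos by auto
next
  show "continuous_on {x..y} F" using F_cont_on assms alpha_pos by auto
qed

lemma F_sep: assumes "\<epsilon> > 0" shows "\<exists>\<eta>>0. \<forall>x>0. \<bar>x - \<alpha>\<bar> \<ge> \<epsilon> \<longrightarrow> F x \<le> F \<alpha> - \<eta>"
proof -
  define \<eta>1 where "\<eta>1 = F \<alpha> - F (\<alpha> + \<epsilon>)"
  have e1: "\<eta>1 > 0" using F_right[of \<alpha> "\<alpha>+\<epsilon>"] assms by (simp add: \<eta>1_def)
  define \<eta> where "\<eta> = (if \<alpha> - \<epsilon> > 0 then min \<eta>1 (F \<alpha> - F (\<alpha> - \<epsilon>)) else \<eta>1)"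
  have "\<eta> > 0" using e1 F_left[of "\<alpha> - \<epsilon>" \<alpha>] assms by (auto simp: \<eta>_def)
  moreover have "F x \<le> F \<alpha> - \<eta>" if "x > 0" "\<bar>x - \<alpha>\<bar> \<ge> \<epsilon>" for x
  proof (cases "x \<ge> \<alpha> + \<epsilon>")
    case True
    then have "F x \<le> F (\<alpha> + \<epsilon>)" using F_right[of "\<alpha>+\<epsilon>" x] assms by (cases "x = \<alpha> + \<epsilon>") auto
    then show ?thesis unfolding \<eta>_def \<eta>1_def by auto
  next
    case False
    then have x: "x \<le> \<alpha> - \<epsilon>" using that by auto
    then have "F x \<le> F (\<alpha> - \<epsilon>)" using F_left[of x "\<alpha> - \<epsilon>"] that assms by (cases "x = \<alpha> - \<epsilon>") auto
    then show ?thesis unfolding \<eta>_def using x that by auto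
  qed
  ultimately show ?thesis by blast
qed

end



lemma pow_exp: assumes "0 < \<theta>" shows "\<theta> ^ k = exp (- (- ln \<theta>) * real k)"
proof -
  have "exp (- (- ln \<theta>) * real k) = exp (ln \<theta>) ^ k" by (simp add: exp_of_nat_mult[symmetric] mult.commute)
  then show ?thesis using assms by simp
qed

lemma step_bounds:
  assumes th: "0 < \<theta>" "\<theta> < 1" and k: "k \<ge> 1"
  defines "L \<equiv> - ln \<theta>"
  shows "\<theta> ^ (k+1) / real (k+1) \<le> E1 (L * k) - E1 (L * (k+1))"
    and "E1 (L * k) - E1 (L * (k+1)) \<le> \<theta> ^ k / real k"
proof -
  have lam: "L > 0" using th by (simp add: L_def)
  have pos: "0 < L * k" using lam k by simp
  have e: "E1 (L * k) - E1 (L * (k+1)) = integral {L*k..L*(k+1)} ff"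
    using E1_split[OF pos, of "L * (k+1)"] lam by simp
  have w: "L * (k+1) - L * k = L" by (simp add: algebra_simps)
  have "\<theta> ^ m / real m = L * ff (L * m)" if "m \<ge> 1" for m :: nat
    using pow_exp[OF th(1), of m] lam that by (simp add: ff_def L_def)
  from this[of k] this[of "k+1"] k
  have t: "\<theta> ^ k / real k = L * ff (L * k)" "\<theta> ^ (k+1) / real (k+1) = L * ff (L * (k+1))"
    by auto
  show "\<theta> ^ (k+1) / real (k+1) \<le> E1 (L * k) - E1 (L * (k+1))"
    using int_bounds(1)[OF pos, of "L * (k+1)"] lam e w t by simp
  show "E1 (L * k) - E1 (L * (k+1)) \<le> \<theta> ^ k / real k"
    using int_bounds(2)[OF pos, of "L * (k+1)"] lam e w t by simp
qed

lemma series_bounds: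
  assumes th: "0 < \<theta>" "\<theta> < 1" and r: "r \<ge> 1"
  defines "L \<equiv> - ln \<theta>"
  shows "summable (\<lambda>i. \<theta> ^ (r + i) / real (r + i))"
    and "E1 (L * r) \<le> (\<Sum>i. \<theta> ^ (r + i) / real (r + i))"
    and "(\<Sum>i. \<theta> ^ (r + i) / real (r + i)) \<le> E1 (L * r) + \<theta> ^ r / r"
proof -
  have lam: "L > 0" using th by (simp add: L_def)
  let ?a = "\<lambda>i. \<theta> ^ (r + i) / real (r + i)"
  let ?g = "\<lambda>i. E1 (L * real (r + i))"
  have sg: "summable (\<lambda>i. \<theta> ^ r * \<theta> ^ i)"
    using th by (intro summable_mult summable_geometric) auto
  show sa: "summable ?a"
  proof (rule summable_comparison_test[OF _ sg])
    show "\<exists>N. \<forall>n\<ge>N. norm (?a n) \<le> \<theta> ^ r * \<theta> ^ n"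
      using th r by (auto simp: divide_simps power_add)
  qed
  have tel: "(\<Sum>i<n. ?g i - ?g (Suc i)) = ?g 0 - ?g n" for n
    by (rule sum_lessThan_telescope')
  have lo: "?g 0 - ?g n \<le> sum ?a {..<n}" for n
  proof -
    have "?g i - ?g (Suc i) \<le> ?a i" for i
      using step_bounds(2)[OF th, of "r+i"] r by (simp add: L_def add_ac)
    then have "(\<Sum>i<n. ?g i - ?g (Suc i)) \<le> sum ?a {..<n}" by (intro sum_mono) auto
    then show ?thesis using tel by simp
  qed
  have up: "sum ?a {..<Suc n} \<le> ?g 0 - ?g n + \<theta> ^ r / r" for n
  proof -
    have "?a (Suc i) \<le> ?g i - ?g (Suc i)" for i
      using step_bounds(1)[OF th, of "r+i"] r by (simp add: L_def add_ac)
    then have "(\<Sum>i<n. ?a (Suc i)) \<le> (\<Sum>i<n. ?g i - ?g (Suc i))" by (intro sum_mono) auto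
    moreover have "sum ?a {..<Suc n} = ?a 0 + (\<Sum>i<n. ?a (Suc i))" by (rule sum.lessThan_Suc_shift)
    ultimately show ?thesis using tel[of n] by simp
  qed
  have gpos: "?g n \<ge> 0" for n using E1_bound(2)[of "L * real (r+n)"] lam r by simp
  show "suminf ?a \<le> E1 (L * r) + \<theta> ^ r / r"
  proof (rule suminf_le_const[OF sa])
    fix n show "sum ?a {..<n} \<le> E1 (L * r) + \<theta> ^ r / r"
    proof (cases n)
      case 0 then show ?thesis using gpos[of 0] th by simp
    next
      case (Suc m) then show ?thesis using up[of m] gpos[of m] by simp
    qed
  qed
  have g0: "?g \<longlonglongrightarrow> 0"
  proof (rule tendsto_sandwich[of "\<lambda>_. 0" _ _ "\<lambda>n. \<theta> ^ r * \<theta> ^ n / (L * r)"])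
    show "\<forall>\<^sub>F n in sequentially. 0 \<le> ?g n" using gpos by simp
    show "\<forall>\<^sub>F n in sequentially. ?g n \<le> \<theta> ^ r * \<theta> ^ n / (L * r)"
    proof (intro always_eventually allI)
      fix n
      have p: "0 < L * real (r + n)" using lam r by simp
      have "?g n \<le> exp (- (L * real (r + n))) / (L * real (r + n))" using E1_bound(1)[OF p] .
      also have "exp (- (L * real (r + n))) = \<theta> ^ (r + n)" using pow_exp[OF th(1), of "r+n"] by (simp add: L_def)
      also have "\<theta> ^ (r + n) / (L * real (r + n)) \<le> \<theta> ^ (r + n) / (L * r)"
        using lam r th by (intro divide_left_mono mult_left_mono) auto
      finally show "?g n \<le> \<theta> ^ r * \<theta> ^ n / (L * r)" by (simp add: power_add)
    qed
    have "(\<lambda>n. \<theta> ^ r * \<theta> ^ n / (L * r)) \<longlonglongrightarrow> \<theta> ^ r * 0 / (L * r)"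
      using th lam r by (intro tendsto_intros LIMSEQ_power_zero) auto
    then show "(\<lambda>n. \<theta> ^ r * \<theta> ^ n / (L * r)) \<longlonglongrightarrow> 0" by simp
  qed auto
  have "(\<lambda>n. ?g 0 - ?g n) \<longlonglongrightarrow> ?g 0 - 0" by (intro tendsto_intros g0)
  moreover have "(\<lambda>n. sum ?a {..<n}) \<longlonglongrightarrow> suminf ?a" using summable_LIMSEQ[OF sa] .
  ultimately have "?g 0 - 0 \<le> suminf ?a" by (rule LIMSEQ_le) (use lo in auto)
  then show "E1 (L * r) \<le> suminf ?a" by simp
qed




lemma L_bounds: fixes \<theta> :: real assumes "0 < \<theta>" "\<theta> < 1"
  shows "1 - \<theta> \<le> - ln \<theta>" "- ln \<theta> > 0" "\<theta> \<le> (1 - \<theta>) / (- ln \<theta>)" "(1 - \<theta>) / (- ln \<theta>) \<le> 1"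
proof -
  show "1 - \<theta> \<le> - ln \<theta>" using ln_le_minus_one[of \<theta>] assms by simp
  show lp: "- ln \<theta> > 0" using assms by simp
  have "ln (1/\<theta>) \<le> 1/\<theta> - 1" using ln_le_minus_one[of "1/\<theta>"] assms by simp
  then have "- ln \<theta> \<le> (1 - \<theta>) / \<theta>" using assms by (simp add: ln_div divide_simps)
  then have "\<theta> * (- ln \<theta>) \<le> 1 - \<theta>" using assms by (simp add: divide_simps mult.commute)
  then show "\<theta> \<le> (1 - \<theta>) / (- ln \<theta>)" using lp by (simp add: divide_simps)
  show "(1 - \<theta>) / (- ln \<theta>) \<le> 1" using lp \<open>1 - \<theta> \<le> - ln \<theta>\<close> by (simp add: divide_simps)
qed

lemma Pr_bounds: assumes th: "0 < \<theta>" "\<theta> < 1" and r: "r \<ge> 1"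
  defines "L \<equiv> - ln \<theta>"
  shows "(1 - \<theta>) / L * F (L * r) \<le> Pr \<theta> r" "Pr \<theta> r \<le> (1 - \<theta>) / L * F (L * r) + (1 - \<theta>)"
proof -
  have lp: "L > 0" using th by (simp add: L_def)
  let ?S = "\<Sum>i. \<theta> ^ (r + i) / real (r + i)"
  have P: "Pr \<theta> r = real r * (1 - \<theta>) * ?S" using r by (simp add: Pr_def)
  have FF: "(1 - \<theta>) / L * F (L * r) = real r * (1 - \<theta>) * E1 (L * r)"
    using lp by (simp add: F_def)
  have c: "0 \<le> real r * (1 - \<theta>)" using th by simp
  show "(1 - \<theta>) / L * F (L * r) \<le> Pr \<theta> r"
    unfolding FF P using series_bounds(2)[OF th r] c by (simp add: L_def mult_left_mono)
  have "Pr \<theta> r \<le> real r * (1 - \<theta>) * (E1 (L * r) + \<theta> ^ r / r)"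
    unfolding P using series_bounds(3)[OF th r] c by (simp add: L_def mult_left_mono)
  also have "\<dots> = (1 - \<theta>) / L * F (L * r) + (1 - \<theta>) * \<theta> ^ r"
    unfolding FF using r by (simp add: algebra_simps)
  also have "(1 - \<theta>) * \<theta> ^ r \<le> (1 - \<theta>)" using th by (simp add: power_le_one)
  finally show "Pr \<theta> r \<le> (1 - \<theta>) / L * F (L * r) + (1 - \<theta>)" by simp
qed

context amax begin

lemma beta_pos: "F \<alpha> > 0" using alpha_pos E1_pos[OF alpha_pos] by (simp add: F_def)

lemma F_nonneg: "x > 0 \<Longrightarrow> F x \<ge> 0" using E1_bound(2)[of x] by (simp add: F_def)

lemma PrU: assumes th: "0 < \<theta>" "\<theta> < 1" shows "Pr \<theta> r \<le> F \<alpha> + (1 - \<theta>)"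
proof (cases "r = 0")
  case True then show ?thesis using beta_pos by (simp add: Pr_def)
next
  case False
  then have r: "r \<ge> 1" by simp
  define L where "L = - ln \<theta>"
  have lp: "L > 0" using th by (simp add: L_def)
  have Fp: "0 \<le> F (L * r)" "F (L * r) \<le> F \<alpha>" using F_nonneg[of "L*r"] alpha_max lp r by auto
  have "(1 - \<theta>) / L * F (L * r) \<le> 1 * F (L * r)"
    using L_bounds[OF th] Fp by (intro mult_right_mono) (auto simp: L_def)
  then show ?thesis using Pr_bounds(2)[OF th r] Fp by (simp add: L_def)
qed

lemma PrU2: assumes th: "0 < \<theta>" "\<theta> < 1" and r: "r \<ge> 1"
  shows "Pr \<theta> r \<le> F (- ln \<theta> * r) + (1 - \<theta>)"
proof -
  define L where "L = - ln \<theta>"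
  have lp: "L > 0" using th by (simp add: L_def)
  have Fp: "0 \<le> F (L * r)" using F_nonneg[of "L*r"] lp r by auto
  have "(1 - \<theta>) / L * F (L * r) \<le> 1 * F (L * r)"
    using L_bounds[OF th] Fp by (intro mult_right_mono) (auto simp: L_def)
  then show ?thesis using Pr_bounds(2)[OF th r] by (simp add: L_def)
qed

lemma bdd: assumes "0 < \<theta>" "\<theta> < 1" shows "bdd_above (range (Pr \<theta>))"
  using PrU[OF assms] by (intro bdd_aboveI) auto

lemma Popt_le: assumes "0 < \<theta>" "\<theta> < 1" shows "Popt \<theta> \<le> F \<alpha> + (1 - \<theta>)"
  unfolding Popt_def using PrU[OF assms] by (intro cSUP_least) auto

lemma Popt_ge: assumes "0 < \<theta>" "\<theta> < 1" shows "Pr \<theta> r \<le> Popt \<theta>"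
  unfolding Popt_def using bdd[OF assms] by (intro cSUP_upper) auto

lemma ev01: "eventually (\<lambda>\<theta>. 0 < \<theta> \<and> \<theta> < 1) (at_left (1::real))"
  using eventually_at_left_real[of 0 1] by (auto elim: eventually_mono)

lemma L_tends: "((\<lambda>\<theta>. - ln \<theta>) \<longlongrightarrow> 0) (at_left (1::real))"
proof -
  have "((\<lambda>\<theta>. - ln \<theta>) \<longlongrightarrow> - ln 1) (at_left (1::real))"
    by (intro tendsto_intros) auto
  then show ?thesis by simp
qed

lemma ratio_tends: "((\<lambda>\<theta>. (1 - \<theta>) / (- ln \<theta>)) \<longlongrightarrow> 1) (at_left (1::real))"
proof (rule tendsto_sandwich[of "\<lambda>\<theta>. \<theta>" _ _ "\<lambda>_. 1"])
  show "\<forall>\<^sub>F \<theta> in at_left (1::real). \<theta> \<le> (1 - \<theta>) / - ln \<theta>"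
    using ev01 by (rule eventually_mono) (use L_bounds in auto)
  show "\<forall>\<^sub>F \<theta> in at_left (1::real). (1 - \<theta>) / - ln \<theta> \<le> 1"
    using ev01 by (rule eventually_mono) (use L_bounds in auto)
  show "((\<lambda>\<theta>. \<theta>) \<longlongrightarrow> (1::real)) (at_left 1)" by (rule tendsto_ident_at)
qed auto

lemma Popt_tends: "(Popt \<longlongrightarrow> F \<alpha>) (at_left 1)"
proof -
  define h where "h \<theta> = - ln \<theta> * real (nat \<lceil>\<alpha> / (- ln \<theta>)\<rceil>)" for \<theta> :: real
  have hb: "\<alpha> \<le> h \<theta> \<and> h \<theta> \<le> \<alpha> + (- ln \<theta>)" if "0 < \<theta>" "\<theta> < 1" for \<theta>
  proof -
    define L where "L = - ln \<theta>"
    have lp: "L > 0" using that by (simp add: L_def)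
    define c where "c = \<lceil>\<alpha> / L\<rceil>"
    have c: "real (nat c) = of_int c"
      using alpha_pos lp by (simp add: divide_pos_pos c_def)
    have "\<alpha> / L \<le> of_int c" unfolding c_def by (rule le_of_int_ceiling)
    then have 1: "\<alpha> \<le> L * of_int c" using lp by (simp add: divide_simps mult.commute)
    have "of_int c \<le> \<alpha> / L + 1" unfolding c_def by (rule of_int_ceiling_le_add_one)
    then have "L * of_int c \<le> L * (\<alpha> / L + 1)" using lp by (intro mult_left_mono) auto
    also have "\<dots> = \<alpha> + L" using lp by (simp add: algebra_simps)
    finally have 2: "L * of_int c \<le> \<alpha> + L" .
    have "h \<theta> = L * of_int c" unfolding h_def L_def[symmetric] c_def[symmetric] c ..
    then show ?thesis using 1 2 by (simp add: L_def)
  qed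
  have ht: "(h \<longlongrightarrow> \<alpha>) (at_left 1)"
  proof (rule tendsto_sandwich[of "\<lambda>_. \<alpha>" _ _ "\<lambda>\<theta>. \<alpha> + (- ln \<theta>)"])
    show "\<forall>\<^sub>F \<theta> in at_left (1::real). \<alpha> \<le> h \<theta>" using ev01 by (rule eventually_mono) (use hb in auto)
    show "\<forall>\<^sub>F \<theta> in at_left (1::real). h \<theta> \<le> \<alpha> + (- ln \<theta>)" using ev01 by (rule eventually_mono) (use hb in auto)
    show "((\<lambda>\<theta>. \<alpha> + - ln \<theta>) \<longlongrightarrow> \<alpha>) (at_left 1)"
      using tendsto_add[OF tendsto_const L_tends, of \<alpha>] by simp
  qed auto
  have Fc: "isCont F \<alpha>" using F_deriv[OF alpha_pos] DERIV_isCont by blast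
  have lo: "((\<lambda>\<theta>. \<theta> * F (h \<theta>)) \<longlongrightarrow> 1 * F \<alpha>) (at_left 1)"
    by (intro tendsto_mult tendsto_ident_at isCont_tendsto_compose[OF Fc ht])
  show ?thesis
  proof (rule tendsto_sandwich[of "\<lambda>\<theta>. \<theta> * F (h \<theta>)" _ _ "\<lambda>\<theta>. F \<alpha> + (1 - \<theta>)"])
    show "\<forall>\<^sub>F \<theta> in at_left (1::real). \<theta> * F (h \<theta>) \<le> Popt \<theta>"
      using ev01
    proof (rule eventually_mono)
      fix \<theta> :: real assume th: "0 < \<theta> \<and> \<theta> < 1"
      define r where "r = nat \<lceil>\<alpha> / (- ln \<theta>)\<rceil>"
      have lp: "- ln \<theta> > 0" using th by simp
      have "\<alpha> / (- ln \<theta>) > 0" by (intro divide_pos_pos alpha_pos lp)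
      then have "\<lceil>\<alpha> / (- ln \<theta>)\<rceil> \<ge> 1" by simp
      then have r: "r \<ge> 1" unfolding r_def by linarith
      have hr: "h \<theta> = - ln \<theta> * r" by (simp add: h_def r_def)
      have "\<theta> * F (h \<theta>) \<le> (1 - \<theta>) / (- ln \<theta>) * F (h \<theta>)"
        using L_bounds[of \<theta>] th F_nonneg[of "h \<theta>"] hb[of \<theta>] alpha_pos by (intro mult_right_mono) auto
      also have "\<dots> \<le> Pr \<theta> r" using Pr_bounds(1)[of \<theta> r] th r hr by simp
      also have "\<dots> \<le> Popt \<theta>" using Popt_ge th by auto
      finally show "\<theta> * F (h \<theta>) \<le> Popt \<theta>" .
    qed
    show "\<forall>\<^sub>F \<theta> in at_left (1::real). Popt \<theta> \<le> F \<alpha> + (1 - \<theta>)"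
      using ev01 by (rule eventually_mono) (use Popt_le in auto)
    show "((\<lambda>\<theta>. \<theta> * F (h \<theta>)) \<longlongrightarrow> F \<alpha>) (at_left 1)" using lo by simp
    have "((\<lambda>\<theta>. F \<alpha> + (1 - \<theta>)) \<longlongrightarrow> F \<alpha> + (1 - 1)) (at_left (1::real))"
      by (intro tendsto_intros tendsto_ident_at)
    then show "((\<lambda>\<theta>. F \<alpha> + (1 - \<theta>)) \<longlongrightarrow> F \<alpha>) (at_left 1)" by simp
  qed
qed

lemma rstar_tends:
  fixes rstar :: "real \<Rightarrow> nat"
  assumes opt: "\<forall>\<theta>\<in>{0<..<1}. Popt \<theta> = Pr \<theta> (rstar \<theta>)"
  shows "((\<lambda>\<theta>. (1 - \<theta>) * real (rstar \<theta>)) \<longlongrightarrow> \<alpha>) (at_left 1)"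
proof -
  have bp: "F \<alpha> / 2 > 0" using beta_pos by simp
  have e1: "\<forall>\<^sub>F \<theta> in at_left (1::real). Popt \<theta> > F \<alpha> / 2"
    using order_tendstoD(1)[OF Popt_tends, of "F \<alpha> / 2"] beta_pos by simp
  have t0: "((\<lambda>\<theta>. 1 - \<theta>) \<longlongrightarrow> (0::real)) (at_left (1::real))"
  proof -
    have "((\<lambda>\<theta>. 1 - \<theta>) \<longlongrightarrow> (1 - 1::real)) (at_left (1::real))"
      by (intro tendsto_intros tendsto_ident_at)
    then show ?thesis by simp
  qed
  have e2: "\<forall>\<^sub>F \<theta> in at_left (1::real). 1 - \<theta> < F \<alpha> / 2"
    using order_tendstoD(2)[OF t0 bp] .
  have evR: "\<forall>\<^sub>F \<theta> in at_left (1::real). 0 < \<theta> \<and> \<theta> < 1 \<and> rstar \<theta> \<ge> 1 \<and> Popt \<theta> = Pr \<theta> (rstar \<theta>)"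
    using ev01 e1 e2
  proof eventually_elim
    case (elim \<theta>)
    then have P: "Popt \<theta> = Pr \<theta> (rstar \<theta>)" using opt by auto
    have "rstar \<theta> \<noteq> 0"
    proof
      assume "rstar \<theta> = 0"
      then have "Popt \<theta> = 1 - \<theta>" using P by (simp add: Pr_def)
      then show False using elim by simp
    qed
    then show ?case using elim P by auto
  qed
  define y where "y \<theta> = - ln \<theta> * real (rstar \<theta>)" for \<theta> :: real
  have Fy: "((\<lambda>\<theta>. F (y \<theta>)) \<longlongrightarrow> F \<alpha>) (at_left 1)"
  proof (rule tendsto_sandwich[of "\<lambda>\<theta>. Popt \<theta> - (1 - \<theta>)" _ _ "\<lambda>_. F \<alpha>"])
    show "\<forall>\<^sub>F \<theta> in at_left (1::real). Popt \<theta> - (1 - \<theta>) \<le> F (y \<theta>)"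
      using evR by (rule eventually_mono) (use PrU2 in \<open>fastforce simp: y_def\<close>)
    show "\<forall>\<^sub>F \<theta> in at_left (1::real). F (y \<theta>) \<le> F \<alpha>"
      using evR
    proof (rule eventually_mono)
      fix \<theta> :: real assume h: "0 < \<theta> \<and> \<theta> < 1 \<and> rstar \<theta> \<ge> 1 \<and> Popt \<theta> = Pr \<theta> (rstar \<theta>)"
      have "- ln \<theta> > 0" using h by simp
      then have "y \<theta> > 0" using h unfolding y_def by (intro mult_pos_pos) auto
      then show "F (y \<theta>) \<le> F \<alpha>" using alpha_max by blast
    qed
    show "((\<lambda>\<theta>. Popt \<theta> - (1 - \<theta>)) \<longlongrightarrow> F \<alpha>) (at_left 1)"
      using tendsto_diff[OF Popt_tends t0] by simp
  qed auto
  have yt: "(y \<longlongrightarrow> \<alpha>) (at_left 1)"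
  proof (rule tendstoI)
    fix e :: real assume e: "e > 0"
    obtain \<eta> where eta: "\<eta> > 0" "\<forall>x>0. \<bar>x - \<alpha>\<bar> \<ge> e \<longrightarrow> F x \<le> F \<alpha> - \<eta>"
      using F_sep[OF e] by blast
    have "\<forall>\<^sub>F \<theta> in at_left (1::real). dist (F (y \<theta>)) (F \<alpha>) < \<eta>"
      using tendstoD[OF Fy eta(1)] .
    then show "\<forall>\<^sub>F \<theta> in at_left (1::real). dist (y \<theta>) \<alpha> < e"
      using evR
    proof eventually_elim
      case (elim \<theta>)
      have "- ln \<theta> > 0" using elim by simp
      then have "y \<theta> > 0" using elim unfolding y_def by (intro mult_pos_pos) auto
      then show ?case using elim eta(2)[rule_format, of "y \<theta>"] by (force simp: dist_real_def)
    qed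
  qed
  have "((\<lambda>\<theta>. (1 - \<theta>) / (- ln \<theta>) * y \<theta>) \<longlongrightarrow> 1 * \<alpha>) (at_left 1)"
    by (intro tendsto_mult ratio_tends yt)
  then have "((\<lambda>\<theta>. (1 - \<theta>) / (- ln \<theta>) * y \<theta>) \<longlongrightarrow> \<alpha>) (at_left 1)" by simp
  then show ?thesis
  proof (rule Lim_transform_eventually)
    show "\<forall>\<^sub>F \<theta> in at_left (1::real). (1 - \<theta>) / (- ln \<theta>) * y \<theta> = (1 - \<theta>) * real (rstar \<theta>)"
      using ev01 by (rule eventually_mono) (auto simp: y_def)
  qed
qed

end

theorem theorem3p2:
  fixes \<alpha> \<beta> :: real
  assumes alpha_pos: "\<alpha> > 0"
    and alpha_max: "\<forall>x>0. F x \<le> F \<alpha>"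
    and beta_def: "\<beta> = F \<alpha>"
  shows "(\<forall>rstar :: real \<Rightarrow> nat.
            (\<forall>\<theta>\<in>{0<..<1}. Popt \<theta> = Pr \<theta> (rstar \<theta>)) \<longrightarrow>
            ((\<lambda>\<theta>. (1 - \<theta>) * real (rstar \<theta>)) \<longlongrightarrow> \<alpha>) (at_left 1))
         \<and> (Popt \<longlongrightarrow> \<beta>) (at_left 1)"
proof -
  interpret amax \<alpha> using alpha_pos alpha_max by unfold_locales
  show ?thesis using rstar_tends Popt_tends beta_def by auto
qed

end
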